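(* Let $a_1 \ge 1$ be an integer and $f := X^2 - a_1X - 1$. There exist $\bm{x} \in \mathcal{L}(f)$ and an integer $m \ge 1$ such that $\rho(\bm{x}; m) = 4$ and $x_j \not\equiv 0 \pmod m$ for all $j \ge 0$. In particular, $4 \in \mathcal{R}(f)$.
   Context: $\mathcal{L}(f)$ is the set of integer sequences $\bm{x}=(x_n)_{n\ge0}$ with $x_{n+2} = a_1x_{n+1} + x_n$ for all $n\ge0$. For an integer $m\ge1$, $\rho(\bm{x};m) := \#\{x_n \bmod m : n\ge0\}$, and $\mathcal{R}(f) := \{\rho(\bm{x}; m) : \bm{x}\in\mathcal{L}(f),\ m\in\mathbb{Z}^+\}$. *)

theory Defs
  imports Main
begin

text \<open>Linear recurrence sequences for f = X^2 - a1 X - 1: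
  integer sequences with x (n+2) = a1 * x (n+1) + x n.\<close>
definition LRS :: "int \<Rightarrow> (nat \<Rightarrow> int) set" where
  "LRS a1 = {x. \<forall>n. x (n + 2) = a1 * x (n + 1) + x n}"

definition rho :: "(nat \<Rightarrow> int) \<Rightarrow> int \<Rightarrow> nat" where
  "rho x m = card {x n mod m | n. True}"

definition Rset :: "int \<Rightarrow> nat set" where
  "Rset a1 = {rho x m | x m. x \<in> LRS a1 \<and> m \<ge> 1}"

end

theory Submission
  imports Defs
begin

fun sq :: "int \<Rightarrow> int \<Rightarrow> int \<Rightarrow> nat \<Rightarrow> int" where
  "sq a u v 0 = u"
| "sq a u v (Suc 0) = v"
| "sq a u v (Suc (Suc n)) = a * sq a u v (Suc n) + sq a u v n"

lemma sq_LRS: "sq a u v \<in> LRS a"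
  unfolding LRS_def by (auto simp: numeral_2_eq_2)

lemma inv:
  assumes "x \<in> LRS a" "(x 0 mod m, x 1 mod m) \<in> S"
    "\<forall>(u,v)\<in>S. (v, (a*v+u) mod m) \<in> S"
  shows "(x n mod m, x (Suc n) mod m) \<in> S"
proof (induction n)
  case 0 then show ?case using assms by simp
next
  case (Suc n)
  have e: "x (Suc (Suc n)) = a * x (Suc n) + x n"
  proof -
    have "x (n + 2) = a * x (n + 1) + x n" using assms(1) unfolding LRS_def by blast
    then show ?thesis by simp
  qed
  have "x (Suc (Suc n)) mod m = (a * (x (Suc n) mod m) + x n mod m) mod m"
  proof -
    have "(a * (x (Suc n) mod m) + x n mod m) mod m = ((a * (x (Suc n) mod m)) mod m + x n mod m) mod m"
      by (simp add: mod_add_left_eq)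
    also have "\<dots> = ((a * x (Suc n)) mod m + x n mod m) mod m" by (simp add: mod_mult_right_eq)
    also have "\<dots> = (a * x (Suc n) + x n) mod m" by (simp add: mod_add_eq)
    finally show ?thesis unfolding e by simp
  qed
  with Suc assms(3) show ?case by auto
qed

lemma resid:
  assumes "x \<in> LRS a" "(x 0 mod m, x 1 mod m) \<in> S"
    "\<forall>(u,v)\<in>S. (v, (a*v+u) mod m) \<in> S"
  shows "{x n mod m | n. True} \<subseteq> fst ` S"
  using inv[OF assms] by force

lemma modk: "0 \<le> b \<Longrightarrow> b < m \<Longrightarrow> c = b + k*m \<Longrightarrow> c mod (m::int) = b"
  by simp

theorem mainTheorem16:
  fixes a1 :: int
  assumes "a1 \<ge> 1"
  shows "(\<exists>x m. x \<in> LRS a1 \<and> m \<ge> 1 \<and> rho x m = 4 \<and> (\<forall>j. \<not> m dvd x j))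
         \<and> 4 \<in> Rset a1"
proof -
  have ex: "\<exists>x m. x \<in> LRS a1 \<and> m \<ge> 1 \<and> rho x m = 4 \<and> (\<forall>j. \<not> m dvd x j)"
  proof (cases "a1 = 2")
    case True
    define x where "x = sq 2 1 1"
    define S :: "(int \<times> int) set" where "S = {(1,1),(1,3),(3,2),(2,2),(2,1),(1,4),(4,4),(4,2),(2,3),(3,3),(3,4),(4,1)}"
    have L: "x \<in> LRS 2" unfolding x_def by (rule sq_LRS)
    have sub: "{x n mod 5 | n. True} \<subseteq> fst ` S"
      by (rule resid[OF L]) (simp_all add: S_def x_def)
    have fS: "fst ` S = {1,2,3,4}" unfolding S_def by auto
    have "x 0 mod 5 = 1" "x 2 mod 5 = 3" "x 3 mod 5 = 2" "x 6 mod 5 = 4"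
      by (simp_all add: x_def numeral_eq_Suc)
    moreover have "{x 0 mod 5, x 2 mod 5, x 3 mod 5, x 6 mod 5} \<subseteq> {x n mod 5 | n. True}" by blast
    ultimately have sup: "{1,2,3,4} \<subseteq> {x n mod 5 | n. True}" by simp
    have eq: "{x n mod 5 | n. True} = {1,2,3,4}" using sub sup fS by auto
    have "rho x 5 = 4" unfolding rho_def eq by simp
    moreover have "\<forall>j. \<not> (5::int) dvd x j"
    proof
      fix j
      have "x j mod 5 \<in> {1,2,3,4}" using eq by blast
      then show "\<not> (5::int) dvd x j" by auto
    qed
    ultimately show ?thesis using L True by (intro exI[of _ x] exI[of _ 5]) auto
  next
    case False
    define a where "a = a1"
    define m where "m = a^2 + 4"
    define x where "x = sq a 2 a"
    define S :: "(int \<times> int) set" where "S = {(2,a),(a,m-2),(m-2,m-a),(m-a,2)}"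
    have a1: "a \<ge> 1" "a \<noteq> 2" using assms False a_def by auto
    have aa: "a \<le> a*a" using mult_left_mono[of 1 a a] a1 by simp
    have "(a-2)*(a-2) \<ge> 0" by simp
    then have a2: "4*a \<le> a*a + 4" by (simp add: algebra_simps)
    have am: "a < m" "2*a < m" "4 < m" unfolding m_def using a1 aa a2
      by (auto simp: power2_eq_square)
    have L: "x \<in> LRS a" unfolding x_def by (rule sq_LRS)
    have cl: "\<forall>(u,v)\<in>S. (v, (a*v+u) mod m) \<in> S"
    proof -
      have m2: "a*a = m - 4" unfolding m_def by (simp add: power2_eq_square)
      have "(a*a+2) mod m = m - 2" by (rule modk[of _ _ _ 0]) (use am m2 in auto)
      moreover have "(a*(m-2)+a) mod m = m - a"
        by (rule modk[of _ _ _ "a-1"]) (use am a1 in \<open>auto simp: algebra_simps\<close>)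
      moreover have "(a*(m-a)+(m-2)) mod m = 2"
        by (rule modk[of _ _ _ "a"]) (use am m2 in \<open>auto simp: algebra_simps\<close>)
      moreover have "(a*2+(m-a)) mod m = a"
        by (rule modk[of _ _ _ 1]) (use am a1 in \<open>auto simp: algebra_simps\<close>)
      ultimately show ?thesis unfolding S_def by auto
    qed
    have x0: "x 0 mod m = 2" "x 1 mod m = a" using am a1 by (simp_all add: x_def)
    have sub: "{x n mod m | n. True} \<subseteq> fst ` S"
      by (rule resid[OF L _ cl]) (use x0 in \<open>simp add: S_def One_nat_def\<close>)
    have fS: "fst ` S = {2,a,m-2,m-a}" unfolding S_def by auto
    have x23: "x 2 mod m = m - 2" "x 3 mod m = m - a"
    proof -
      have m2: "a*a = m - 4" unfolding m_def by (simp add: power2_eq_square)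
      have "x 2 = a*a+2" by (simp add: x_def numeral_eq_Suc)
      then show "x 2 mod m = m - 2" by (intro modk[of _ _ _ 0]) (use am m2 in auto)
      have "x 3 = a*(a*a+2)+a" by (simp add: x_def numeral_eq_Suc)
      then show "x 3 mod m = m - a"
        by (intro modk[of _ _ _ "a-1"]) (use am a1 m2 in \<open>auto simp: algebra_simps\<close>)
    qed
    have "{x 0 mod m, x 1 mod m, x 2 mod m, x 3 mod m} \<subseteq> {x n mod m | n. True}" by blast
    then have sup: "{2,a,m-2,m-a} \<subseteq> {x n mod m | n. True}"
      using x0 x23 by simp
    have eq: "{x n mod m | n. True} = {2,a,m-2,m-a}" using sub sup fS by auto
    have "card {2,a,m-2,m-a} = 4"
    proof -
      have m2: "a*a = m - 4" unfolding m_def by (simp add: power2_eq_square)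
      have "a*a - a + 2 > 0" using a1 aa by linarith
      then show ?thesis using am a1 m2 by auto
    qed
    then have "rho x m = 4" unfolding rho_def eq by simp
    moreover have "\<forall>j. \<not> m dvd x j"
    proof
      fix j
      have "x j mod m \<in> {2,a,m-2,m-a}" using eq by blast
      then have "x j mod m \<noteq> 0" using am a1 by auto
      then show "\<not> m dvd x j" by (simp add: dvd_eq_mod_eq_0)
    qed
    moreover have "m \<ge> 1" using am by simp
    moreover have "x \<in> LRS a1" using L by (simp add: a_def)
    ultimately show ?thesis by blast
  qed
  then obtain x m where h: "x \<in> LRS a1" "m \<ge> 1" "rho x m = 4" by blast
  then have "4 \<in> Rset a1" unfolding Rset_def by (metis (mono_tags, lifting) mem_Collect_eq)
  with ex show ?thesis by simp
qed

end
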